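(* Let $X',X''$ be a disjoint cover of an index set $X$ (with nonempty value sets for each index), $\Pi':=\Pi X'$, $\Pi'':=\Pi X''$. Suppose that for every set $A$ (among subsets of $\Pi'$, $\Pi''$ and $\Pi' \times\Pi''$) a notion "big subset of $A$" is given such that $A\subseteq A$ is big and, whenever $B\subseteq C\subseteq A$ and $B\subseteq A$ is big, $C\subseteq A$ is big; call $B\subseteq A$ small iff $A-B\subseteq A$ is big. Assume (S*1): for all $\Sigma'\subseteq\Pi'$, $\Sigma''\subseteq\Pi''$ and $\Delta\subseteq\Sigma'\times\Sigma''$, $\Delta\subseteq\Sigma'\times\Sigma''$ is big iff there are $\Gamma'\subseteq\Sigma'$ big and $\Gamma''\subseteq\Sigma''$ big with $\Gamma'\times\Gamma''\subseteq\Delta$. Then for all $\Gamma'\subseteq\Sigma'\subseteq\Pi'$ and $\Gamma''\subseteq\Sigma''\subseteq\Pi''$: $\Gamma'\times\Gamma''\subseteq\Sigma'\times\Sigma''$ is small iff $\Gamma'\subseteq\Sigma'$ is small or $\Gamma''\subseteq\Sigma''$ is small.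
   Context: $\Pi X$ denotes the product of the value sets over the indices in $X$; $\Pi X=\Pi X'\times\Pi X''$ up to re-ordering. *)

theory Defs
  imports Main "HOL-Library.FuncSet"
begin

definition small :: "('a set \<Rightarrow> 'a set \<Rightarrow> bool) \<Rightarrow> 'a set \<Rightarrow> 'a set \<Rightarrow> bool" where
  "small big B A \<longleftrightarrow> big (A - B) A"

end

theory Submission
  imports Defs
begin

theorem fact4p3:
  fixes X X' X'' :: "'i set"
    and V :: "'i \<Rightarrow> 'v set"
    and big1 big2 :: "('i \<Rightarrow> 'v) set \<Rightarrow> ('i \<Rightarrow> 'v) set \<Rightarrow> bool"
    and big12 :: "(('i \<Rightarrow> 'v) \<times> ('i \<Rightarrow> 'v)) set \<Rightarrow> (('i \<Rightarrow> 'v) \<times> ('i \<Rightarrow> 'v)) set \<Rightarrow> bool"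
    and \<Sigma>1 \<Gamma>1 \<Sigma>2 \<Gamma>2 :: "('i \<Rightarrow> 'v) set"
  assumes cover: "X' \<union> X'' = X" and disj: "X' \<inter> X'' = {}"
    and nonempty: "\<forall>i\<in>X. V i \<noteq> {}"
    and refl1: "\<And>A. A \<subseteq> PiE X' V \<Longrightarrow> big1 A A"
    and mono1: "\<And>A B C. A \<subseteq> PiE X' V \<Longrightarrow> B \<subseteq> C \<Longrightarrow> C \<subseteq> A \<Longrightarrow> big1 B A \<Longrightarrow> big1 C A"
    and refl2: "\<And>A. A \<subseteq> PiE X'' V \<Longrightarrow> big2 A A"
    and mono2: "\<And>A B C. A \<subseteq> PiE X'' V \<Longrightarrow> B \<subseteq> C \<Longrightarrow> C \<subseteq> A \<Longrightarrow> big2 B A \<Longrightarrow> big2 C A"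
    and refl12: "\<And>A. A \<subseteq> PiE X' V \<times> PiE X'' V \<Longrightarrow> big12 A A"
    and mono12: "\<And>A B C. A \<subseteq> PiE X' V \<times> PiE X'' V \<Longrightarrow> B \<subseteq> C \<Longrightarrow> C \<subseteq> A \<Longrightarrow>
                   big12 B A \<Longrightarrow> big12 C A"
    and S1: "\<And>S1 S2 D. S1 \<subseteq> PiE X' V \<Longrightarrow> S2 \<subseteq> PiE X'' V \<Longrightarrow> D \<subseteq> S1 \<times> S2 \<Longrightarrow>
               big12 D (S1 \<times> S2) \<longleftrightarrow>
               (\<exists>G1 G2. G1 \<subseteq> S1 \<and> G2 \<subseteq> S2 \<and> big1 G1 S1 \<and> big2 G2 S2 \<and> G1 \<times> G2 \<subseteq> D)"
    and sub1: "\<Gamma>1 \<subseteq> \<Sigma>1" "\<Sigma>1 \<subseteq> PiE X' V"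
    and sub2: "\<Gamma>2 \<subseteq> \<Sigma>2" "\<Sigma>2 \<subseteq> PiE X'' V"
  shows "small big12 (\<Gamma>1 \<times> \<Gamma>2) (\<Sigma>1 \<times> \<Sigma>2) \<longleftrightarrow>
         small big1 \<Gamma>1 \<Sigma>1 \<or> small big2 \<Gamma>2 \<Sigma>2"
proof -
  have D: "\<Sigma>1 \<times> \<Sigma>2 - \<Gamma>1 \<times> \<Gamma>2 \<subseteq> \<Sigma>1 \<times> \<Sigma>2" by blast
  have E: "small big12 (\<Gamma>1 \<times> \<Gamma>2) (\<Sigma>1 \<times> \<Sigma>2) \<longleftrightarrow>
    (\<exists>G1 G2. G1 \<subseteq> \<Sigma>1 \<and> G2 \<subseteq> \<Sigma>2 \<and> big1 G1 \<Sigma>1 \<and> big2 G2 \<Sigma>2 \<and> G1 \<times> G2 \<subseteq> \<Sigma>1 \<times> \<Sigma>2 - \<Gamma>1 \<times> \<Gamma>2)"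
    unfolding small_def using S1[OF sub1(2) sub2(2) D] .
  show ?thesis
  proof
    assume "small big12 (\<Gamma>1 \<times> \<Gamma>2) (\<Sigma>1 \<times> \<Sigma>2)"
    then obtain G1 G2 where g: "G1 \<subseteq> \<Sigma>1" "G2 \<subseteq> \<Sigma>2" "big1 G1 \<Sigma>1" "big2 G2 \<Sigma>2"
      "G1 \<times> G2 \<subseteq> \<Sigma>1 \<times> \<Sigma>2 - \<Gamma>1 \<times> \<Gamma>2" using E by blast
    show "small big1 \<Gamma>1 \<Sigma>1 \<or> small big2 \<Gamma>2 \<Sigma>2"
    proof (cases "G1 \<subseteq> \<Sigma>1 - \<Gamma>1")
      case True
      then have "big1 (\<Sigma>1 - \<Gamma>1) \<Sigma>1" using mono1[OF sub1(2) True _ g(3)] by blast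
      then show ?thesis unfolding small_def by blast
    next
      case False
      then obtain a where a: "a \<in> G1" "a \<in> \<Gamma>1" using g(1) by blast
      have "G2 \<subseteq> \<Sigma>2 - \<Gamma>2" using a g(2,5) by blast
      then have "big2 (\<Sigma>2 - \<Gamma>2) \<Sigma>2" using mono2[OF sub2(2) _ _ g(4)] by blast
      then show ?thesis unfolding small_def by blast
    qed
  next
    assume "small big1 \<Gamma>1 \<Sigma>1 \<or> small big2 \<Gamma>2 \<Sigma>2"
    then show "small big12 (\<Gamma>1 \<times> \<Gamma>2) (\<Sigma>1 \<times> \<Sigma>2)"
    proof
      assume "small big1 \<Gamma>1 \<Sigma>1"
      then have "big1 (\<Sigma>1 - \<Gamma>1) \<Sigma>1" unfolding small_def .
      moreover have "big2 \<Sigma>2 \<Sigma>2" using refl2[OF sub2(2)] .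
      ultimately show ?thesis using E by blast
    next
      assume "small big2 \<Gamma>2 \<Sigma>2"
      then have "big2 (\<Sigma>2 - \<Gamma>2) \<Sigma>2" unfolding small_def .
      moreover have "big1 \<Sigma>1 \<Sigma>1" using refl1[OF sub1(2)] .
      ultimately show ?thesis using E by blast
    qed
  qed
qed

end
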